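(* Let $D\subset\mathbb{R}^d$ ($d\ge 3$) be a bounded regular domain and let $f:\partial D\to\overline{\mathbb{R}}$. Suppose $h_1,h_2$ are harmonic functions on $D$ and $k_1,k_2:D\to\mathbb{R}_+$ are real-valued non-negative superharmonic functions on $D$ such that $h_1$ converges to $f$ controlled by $k_1$ and $h_2$ converges to $f$ controlled by $k_2$. Then $h_1=h_2$ on $D$. In particular, if $u$ is a harmonic function on $D$ which converges to $0$ controlled by a real-valued non-negative superharmonic function $k$ on $D$, then $u=0$ on $D$.
   Context: Controlled convergence: for $f:\partial D\to\overline{\mathbb{R}}$ and $h,k:D\to\mathbb{R}$ with $k\ge 0$, one says $h$ converges to $f$ controlled by $k$ if for every $A\subset D$ and every $y\in\partial D\cap\overline{A}$: (1) if $\limsup_{A\ni x\to y}k(x)<\infty$ then $f(y)\in\mathbb{R}$ and $f(y)=\lim_{A\ni x\to y}h(x)$; (2) if $\lim_{A\ni x\to y}k(x)=\infty$ then $\lim_{A\ni x\to y}\frac{h(x)}{1+k(x)}=0$. *)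

theory Defs
  imports "HOL-Analysis.Analysis"
begin

text \<open>Harmonic functions: C^2 functions on an open set with vanishing Laplacian.
  g is the gradient, H x is the derivative of the gradient at x (the Hessian as a linear map);
  the Laplacian at x is the trace of H x.\<close>
definition harmonic_on :: "('a::euclidean_space) set \<Rightarrow> ('a \<Rightarrow> real) \<Rightarrow> bool" where
  "harmonic_on D h \<longleftrightarrow> open D \<and>
     (\<exists>g H. (\<forall>x\<in>D. (h has_derivative (\<lambda>v. g x \<bullet> v)) (at x)
                    \<and> (g has_derivative H x) (at x)
                    \<and> (\<Sum>b\<in>Basis. H x b \<bullet> b) = 0)
          \<and> (\<forall>v. continuous_on D (\<lambda>x. H x v)))"

definition lsc_on :: "('a::topological_space) set \<Rightarrow> ('a \<Rightarrow> real) \<Rightarrow> bool" where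
  "lsc_on D u \<longleftrightarrow> (\<forall>x\<in>D. \<forall>t. t < u x \<longrightarrow> eventually (\<lambda>y. t < u y) (at x within D))"

definition superharmonic_on :: "('a::euclidean_space) set \<Rightarrow> ('a \<Rightarrow> real) \<Rightarrow> bool" where
  "superharmonic_on D u \<longleftrightarrow> open D \<and> lsc_on D u \<and>
     (\<forall>c r v. 0 < r \<and> cball c r \<subseteq> D \<and> continuous_on (cball c r) v \<and> harmonic_on (ball c r) v
        \<and> (\<forall>y\<in>sphere c r. v y \<le> u y) \<longrightarrow> (\<forall>y\<in>ball c r. v y \<le> u y))"

definition regular_domain :: "('a::euclidean_space) set \<Rightarrow> bool" where
  "regular_domain D \<longleftrightarrow> open D \<and> connected D \<and> D \<noteq> {} \<and> bounded D \<and>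
     (\<forall>\<phi>. continuous_on (frontier D) \<phi> \<longrightarrow>
        (\<exists>h. harmonic_on D h \<and> (\<forall>y\<in>frontier D. (h \<longlongrightarrow> \<phi> y) (at y within D))))"

definition controlled_conv ::
  "('a::euclidean_space) set \<Rightarrow> ('a \<Rightarrow> ereal) \<Rightarrow> ('a \<Rightarrow> real) \<Rightarrow> ('a \<Rightarrow> real) \<Rightarrow> bool" where
  "controlled_conv D f h k \<longleftrightarrow>
     (\<forall>A y. A \<subseteq> D \<and> y \<in> frontier D \<and> y \<in> closure A \<longrightarrow>
        ((Limsup (at y within A) (\<lambda>x. ereal (k x)) < \<infinity> \<longrightarrow>
            f y \<noteq> \<infinity> \<and> f y \<noteq> -\<infinity> \<and> (h \<longlongrightarrow> real_of_ereal (f y)) (at y within A))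
       \<and> (filterlim k at_top (at y within A) \<longrightarrow>
            ((\<lambda>x. h x / (1 + k x)) \<longlongrightarrow> 0) (at y within A))))"

end

theory Submission
  imports Defs
begin


lemma harmonic_cont: "harmonic_on D u \<Longrightarrow> continuous_on D u"
  unfolding harmonic_on_def
  by (metis continuous_at_imp_continuous_on has_derivative_continuous)

lemma harmonic_subset:
  assumes "harmonic_on D u" "open S" "S \<subseteq> D" shows "harmonic_on S u"
proof -
  from assms(1) obtain g H where
    h1: "\<forall>x\<in>D. (u has_derivative (\<lambda>v. g x \<bullet> v)) (at x) \<and> (g has_derivative H x) (at x)
                    \<and> (\<Sum>b\<in>Basis. H x b \<bullet> b) = 0" and c1: "\<forall>v. continuous_on D (\<lambda>x. H x v)"
    unfolding harmonic_on_def by blast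
  have "\<forall>v. continuous_on S (\<lambda>x. H x v)" using c1 assms(3) continuous_on_subset by blast
  then show ?thesis unfolding harmonic_on_def using h1 assms(2,3) by blast
qed

lemma harmonic_lin:
  fixes u v :: "'a::euclidean_space \<Rightarrow> real"
  assumes "harmonic_on D u" "harmonic_on D v"
  shows "harmonic_on D (\<lambda>x. a * u x + b * v x + c \<bullet> x + d)"
proof -
  from assms(1) obtain g1 H1 where o: "open D" and
    h1: "\<forall>x\<in>D. (u has_derivative (\<lambda>v. g1 x \<bullet> v)) (at x) \<and> (g1 has_derivative H1 x) (at x)
                    \<and> (\<Sum>b\<in>Basis. H1 x b \<bullet> b) = 0" and c1: "\<forall>v. continuous_on D (\<lambda>x. H1 x v)"
    unfolding harmonic_on_def by blast
  from assms(2) obtain g2 H2 where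
    h2: "\<forall>x\<in>D. (v has_derivative (\<lambda>w. g2 x \<bullet> w)) (at x) \<and> (g2 has_derivative H2 x) (at x)
                    \<and> (\<Sum>b\<in>Basis. H2 x b \<bullet> b) = 0" and c2: "\<forall>w. continuous_on D (\<lambda>x. H2 x w)"
    unfolding harmonic_on_def by blast
  define g where "g = (\<lambda>x. a *\<^sub>R g1 x + b *\<^sub>R g2 x + c)"
  define H where "H = (\<lambda>x w. a *\<^sub>R H1 x w + b *\<^sub>R H2 x w)"
  have "\<forall>x\<in>D. ((\<lambda>x. a * u x + b * v x + c \<bullet> x + d) has_derivative (\<lambda>w. g x \<bullet> w)) (at x)
                    \<and> (g has_derivative H x) (at x)
                    \<and> (\<Sum>bb\<in>Basis. H x bb \<bullet> bb) = 0"
  proof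
    fix x assume x: "x \<in> D"
    have du: "(u has_derivative (\<lambda>w. g1 x \<bullet> w)) (at x)" using h1 x by blast
    have dv: "(v has_derivative (\<lambda>w. g2 x \<bullet> w)) (at x)" using h2 x by blast
    have dg1: "(g1 has_derivative H1 x) (at x)" using h1 x by blast
    have dg2: "(g2 has_derivative H2 x) (at x)" using h2 x by blast
    have d1: "((\<lambda>x. a * u x + b * v x + c \<bullet> x + d) has_derivative
        (\<lambda>w. a * (g1 x \<bullet> w) + b * (g2 x \<bullet> w) + c \<bullet> w + 0)) (at x)"
      by (intro has_derivative_add has_derivative_mult_right du dv has_derivative_const
           has_derivative_inner_right[OF has_derivative_ident, unfolded id_def]) 
    have e1: "(\<lambda>w. a * (g1 x \<bullet> w) + b * (g2 x \<bullet> w) + c \<bullet> w + 0) = (\<lambda>w. g x \<bullet> w)"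
      by (auto simp: g_def inner_add_left)
    have d2: "(g has_derivative (\<lambda>w. a *\<^sub>R H1 x w + b *\<^sub>R H2 x w + 0)) (at x)"
      unfolding g_def by (intro has_derivative_add has_derivative_scaleR_right dg1 dg2 has_derivative_const)
    have tr: "(\<Sum>bb\<in>Basis. H x bb \<bullet> bb) = a * (\<Sum>bb\<in>Basis. H1 x bb \<bullet> bb) + b * (\<Sum>bb\<in>Basis. H2 x bb \<bullet> bb)"
      by (simp add: H_def inner_add_left sum.distrib sum_distrib_left)
    show "((\<lambda>x. a * u x + b * v x + c \<bullet> x + d) has_derivative (\<lambda>w. g x \<bullet> w)) (at x)
                    \<and> (g has_derivative H x) (at x)
                    \<and> (\<Sum>bb\<in>Basis. H x bb \<bullet> bb) = 0"
    proof (intro conjI)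
      have t1: "(\<Sum>bb\<in>Basis. H1 x bb \<bullet> bb) = 0" using h1 x by blast
      have t2: "(\<Sum>bb\<in>Basis. H2 x bb \<bullet> bb) = 0" using h2 x by blast
      show "(g has_derivative H x) (at x)" using d2 by (simp add: H_def)
      show "((\<lambda>x. a * u x + b * v x + c \<bullet> x + d) has_derivative (\<lambda>w. g x \<bullet> w)) (at x)"
        using d1 e1 by simp
      show "(\<Sum>bb\<in>Basis. H x bb \<bullet> bb) = 0" using tr t1 t2 by simp
    qed
  qed
  note A = this
  have B: "\<forall>w. continuous_on D (\<lambda>x. H x w)"
  proof
    fix w
    have "continuous_on D (\<lambda>x. H1 x w)" "continuous_on D (\<lambda>x. H2 x w)" using c1 c2 by auto
    then show "continuous_on D (\<lambda>x. H x w)"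
      unfolding H_def by (intro continuous_on_add continuous_on_scaleR continuous_on_const)
  qed
  show ?thesis unfolding harmonic_on_def
    apply (rule conjI[OF o]) apply (rule exI[of _ g]) apply (rule exI[of _ H]) using A B by (rule conjI)
qed



lemma nontriv: assumes "y \<in> closure C" "y \<notin> C" shows "at y within C \<noteq> bot"
proof -
  have "y islimpt C" using assms by (simp add: closure_def)
  thus ?thesis by (simp add: trivial_limit_within)
qed

lemma split_lemma:
  fixes k :: "'a::metric_space \<Rightarrow> real"
  assumes "y \<in> closure A"
  shows "(\<exists>n::nat. y \<in> closure {x\<in>A. k x \<le> real n}) \<or> filterlim k at_top (at y within A)"
proof (cases "\<exists>n::nat. y \<in> closure {x\<in>A. k x \<le> real n}")
  case True thus ?thesis by blast
next
  case False
  note n = False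
  have "\<forall>Z. eventually (\<lambda>x. Z \<le> k x) (at y within A)"
  proof
    fix Z :: real
    define n where "n = nat \<lceil>Z\<rceil>"
    have "y \<in> - closure {x\<in>A. k x \<le> real n}" using n by simp
    moreover have "\<forall>x\<in>- closure {x\<in>A. k x \<le> real n}. x \<in> A \<longrightarrow> x \<noteq> y \<longrightarrow> Z \<le> k x"
    proof (intro ballI impI)
      fix x assume a: "x \<in> - closure {x\<in>A. k x \<le> real n}" "x \<in> A"
      have "x \<notin> {x\<in>A. k x \<le> real n}" using a(1) closure_subset[of "{x\<in>A. k x \<le> real n}"] by blast
      then have "k x > real n" using a(2) by simp
      moreover have "Z \<le> real n" unfolding n_def by linarith
      ultimately show "Z \<le> k x" by linarith
    qed
    ultimately show "eventually (\<lambda>x. Z \<le> k x) (at y within A)"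
      unfolding eventually_at_topological by (intro exI[of _ "- closure {x\<in>A. k x \<le> real n}"]) auto
  qed
  then show ?thesis by (simp add: filterlim_at_top)
qed



lemma ev_within: "eventually (\<lambda>x. x \<in> S) (at y within S)"
  by (simp add: eventually_at_filter)

lemma BL:
  fixes h k :: "'a::euclidean_space \<Rightarrow> real"
  assumes oD: "open D" and y: "y \<in> frontier D" and k0: "\<forall>x\<in>D. 0 \<le> k x" and e: "e > 0"
  and H: "\<And>A. A \<subseteq> D \<Longrightarrow> y \<in> closure A \<Longrightarrow>
     (Limsup (at y within A) (\<lambda>x. ereal (k x)) < \<infinity> \<longrightarrow> (h \<longlongrightarrow> L) (at y within A)) \<and>
     (filterlim k at_top (at y within A) \<longrightarrow> ((\<lambda>x. h x / (1 + k x)) \<longlongrightarrow> 0) (at y within A))"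
  shows "\<exists>\<rho>>0. \<forall>x\<in>D. dist x y < \<rho> \<longrightarrow> h x - e * k x < L + e"
proof (rule ccontr)
  assume nc: "\<not> ?thesis"
  define A where "A = {x\<in>D. L + e \<le> h x - e * k x}"
  have AD: "A \<subseteq> D" by (auto simp: A_def)
  have yD: "y \<notin> D" using y oD by (simp add: frontier_def interior_open)
  have yA: "y \<in> closure A" unfolding closure_approachable
  proof (intro allI impI)
    fix r :: real assume "r > 0"
    with nc obtain x where "x \<in> D" "dist x y < r" "\<not> (h x - e*k x < L + e)" by auto
    thus "\<exists>x\<in>A. dist x y < r" by (auto simp: A_def)
  qed
  from split_lemma[OF yA, of k] show False
  proof
    assume "\<exists>n::nat. y \<in> closure {x\<in>A. k x \<le> real n}"
    then obtain n :: nat where n: "y \<in> closure {x\<in>A. k x \<le> real n}" by blast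
    define C where "C = {x\<in>A. k x \<le> real n}"
    have CD: "C \<subseteq> D" using AD by (auto simp: C_def)
    have yC: "y \<in> closure C" using n by (simp add: C_def)
    have nb: "at y within C \<noteq> bot" using nontriv[OF yC] yD CD by blast
    have ev: "eventually (\<lambda>x. x \<in> C) (at y within C)" by (rule ev_within)
    have "Limsup (at y within C) (\<lambda>x. ereal (k x)) \<le> ereal (real n)"
      by (rule Limsup_bounded) (use ev in \<open>eventually_elim, auto simp: C_def\<close>)
    hence "Limsup (at y within C) (\<lambda>x. ereal (k x)) < \<infinity>"
      by (rule order_le_less_trans) simp
    then have tl: "(h \<longlongrightarrow> L) (at y within C)" using H[OF CD yC] by blast
    have "eventually (\<lambda>x. h x < L + e) (at y within C)" using e by (intro order_tendstoD(2)[OF tl]) auto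
    moreover have "eventually (\<lambda>x. L + e \<le> h x) (at y within C)"
      using ev
    proof eventually_elim
      case (elim x)
      then have "x \<in> D" "L + e \<le> h x - e * k x" using AD by (auto simp: C_def A_def)
      moreover have "0 \<le> e * k x" using k0 \<open>x \<in> D\<close> e by simp
      ultimately show ?case by linarith
    qed
    ultimately have "eventually (\<lambda>x. False) (at y within C)" by eventually_elim auto
    thus False using nb by (simp add: eventually_False)
  next
    assume fl: "filterlim k at_top (at y within A)"
    have nb: "at y within A \<noteq> bot" using nontriv[OF yA] yD AD by blast
    have t: "((\<lambda>x. h x/(1+k x)) \<longlongrightarrow> 0) (at y within A)" using H[OF AD yA] fl by blast
    have ev1: "eventually (\<lambda>x. h x/(1+k x) < e/2) (at y within A)"
      using e by (intro order_tendstoD(2)[OF t]) auto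
    have ev2: "eventually (\<lambda>x. (2*(\<bar>L\<bar>+1))/e \<le> k x) (at y within A)"
      using fl by (simp add: filterlim_at_top)
    have "eventually (\<lambda>x. False) (at y within A)"
      using ev1 ev2 ev_within[of A y]
    proof eventually_elim
      case (elim x)
      then have xD: "x \<in> D" and hA: "L + e \<le> h x - e * k x" using AD by (auto simp: A_def)
      have kp: "0 < 1 + k x" using k0 xD by (simp add: add_pos_nonneg)
      have "h x < e/2 * (1 + k x)" using elim(1) kp by (simp add: divide_less_eq mult.commute)
      have "e/2 * ((2*(\<bar>L\<bar>+1))/e) \<le> e/2 * k x" using elim(2) e by (intro mult_left_mono) auto
      moreover have "e/2 * ((2*(\<bar>L\<bar>+1))/e) = \<bar>L\<bar>+1" using e by (simp add: field_simps)
      ultimately have "\<bar>L\<bar>+1 \<le> e/2 * k x" by simp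
      with \<open>h x < e/2 * (1 + k x)\<close> hA abs_ge_minus_self[of L] e show False by (simp add: algebra_simps)
    qed
    thus False using nb by (simp add: eventually_False)
  qed
qed



lemma usc_max:
  fixes F :: "'a::topological_space \<Rightarrow> real"
  assumes cS: "compact S" and ne: "S \<noteq> {}"
    and u: "\<forall>z\<in>S. \<forall>t. F z < t \<longrightarrow> (\<exists>U. open U \<and> z \<in> U \<and> (\<forall>x\<in>U\<inter>S. F x < t))"
  shows "\<exists>x0\<in>S. \<forall>x\<in>S. F x \<le> F x0"
proof (rule ccontr)
  assume "\<not> ?thesis"
  then have "\<forall>x\<in>S. \<exists>x'\<in>S. F x < F x'" by (auto simp: not_le)
  then obtain nx where nx: "\<forall>x\<in>S. nx x \<in> S \<and> F x < F (nx x)" by metis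
  have "\<forall>x\<in>S. \<exists>U. open U \<and> x \<in> U \<and> (\<forall>z\<in>U\<inter>S. F z < F (nx x))" using u nx by blast
  then obtain U where U: "\<forall>x\<in>S. open (U x) \<and> x \<in> U x \<and> (\<forall>z\<in>U x \<inter> S. F z < F (nx x))" by metis
  have cov: "S \<subseteq> (\<Union>c\<in>S. U c)" using U by blast
  obtain T where T: "T \<subseteq> S" "finite T" "S \<subseteq> (\<Union>c\<in>T. U c)"
    using compactE_image[OF cS, of S U] U cov by blast
  have Tne: "T \<noteq> {}" using T ne by auto
  define g where "g = (\<lambda>i. F (nx i))"
  have "Max (g ` T) \<in> g ` T" using T Tne by (intro Max_in) auto
  then obtain j where j: "j \<in> T" "g j = Max (g ` T)" by auto
  have jmax: "\<forall>i\<in>T. g i \<le> g j" using j T by simp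
  have "nx j \<in> S" using T j nx by blast
  then obtain i where i: "i \<in> T" "nx j \<in> U i" using T by blast
  then have "F (nx j) < F (nx i)" using U T \<open>nx j \<in> S\<close> by blast
  with jmax i show False unfolding g_def by force
qed

lemma touch:
  fixes w k :: "'a::euclidean_space \<Rightarrow> real"
  assumes hw: "harmonic_on D w" and sk: "superharmonic_on D k" and e: "e>0" and eta: "\<eta>>0"
    and x0: "x0 \<in> D"
    and mx: "\<forall>x\<in>D. w x - e*k x + \<eta>*(norm x)^2 \<le> w x0 - e*k x0 + \<eta>*(norm x0)^2"
  shows False
proof -
  have oD: "open D" using hw harmonic_on_def by blast
  obtain r where r: "r>0" "cball x0 r \<subseteq> D" using open_contains_cball oD x0 by blast
  define M where "M = w x0 - e*k x0 + \<eta>*(norm x0)^2"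
  define W where "W = (\<lambda>x. (1/e) * w x + 0 * w x + ((2*\<eta>/e) *\<^sub>R x0) \<bullet> x + (\<eta>*(r^2 - (norm x0)^2) - M)/e)"
  have bD: "ball x0 r \<subseteq> D" using r ball_subset_cball by blast
  have hW: "harmonic_on (ball x0 r) W" unfolding W_def
    by (rule harmonic_subset[OF harmonic_lin[OF hw hw] open_ball bD])
  have cw: "continuous_on (cball x0 r) w" using harmonic_cont[OF hw] r(2) continuous_on_subset by blast
  have cW: "continuous_on (cball x0 r) W"
    unfolding W_def by (intro continuous_intros cw)
  have sph: "\<forall>y\<in>sphere x0 r. W y \<le> k y"
  proof
    fix y assume y: "y \<in> sphere x0 r"
    then have yD: "y\<in>D" using r(2) sphere_cball by blast
    have "norm (x0 - y) = r" using y by (simp add: dist_norm)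
    then have "r^2 = (norm (x0 - y))^2" by simp
    also have "\<dots> = (norm y)^2 - 2*(x0 \<bullet> y) + (norm x0)^2"
      by (simp add: power2_norm_eq_inner inner_diff_left inner_diff_right inner_commute)
    finally have ny: "(norm y)^2 = r^2 + 2*(x0 \<bullet> y) - (norm x0)^2" by simp
    have "W y = (w y + \<eta>*(r^2 + 2*(x0 \<bullet> y) - (norm x0)^2) - M)/e" unfolding W_def using e
      by (simp add: field_simps)
    also have "\<dots> = (w y + \<eta>*(norm y)^2 - M)/e" using ny by simp
    also have "\<dots> \<le> k y" using mx yD e unfolding M_def by (simp add: field_simps)
    finally show "W y \<le> k y" .
  qed
  have cmp: "\<forall>c r v. 0 < r \<and> cball c r \<subseteq> D \<and> continuous_on (cball c r) v \<and> harmonic_on (ball c r) v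
        \<and> (\<forall>y\<in>sphere c r. v y \<le> k y) \<longrightarrow> (\<forall>y\<in>ball c r. v y \<le> k y)"
    using sk unfolding superharmonic_on_def by blast
  have "W x0 \<le> k x0" using cmp[rule_format, of r x0 W] r hW cW sph by simp
  moreover have "W x0 = k x0 + \<eta>*r^2/e" unfolding W_def M_def using e
    by (simp add: field_simps power2_norm_eq_inner)
  moreover have "\<eta>*r^2/e > 0" using eta e r by simp
  ultimately show False by linarith
qed



lemma MP:
  fixes w k :: "'a::euclidean_space \<Rightarrow> real"
  assumes bD: "bounded D" and hw: "harmonic_on D w" and sk: "superharmonic_on D k" and e: "e>0"
    and B: "\<forall>y\<in>frontier D. \<exists>\<rho>>0. \<forall>x\<in>D. dist x y < \<rho> \<longrightarrow> w x - e * k x < c"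
  shows "\<forall>x\<in>D. w x - e * k x \<le> c"
proof (rule ccontr)
  assume "\<not> ?thesis"
  then obtain x1 where x1: "x1 \<in> D" "w x1 - e*k x1 > c" by (auto simp: not_le)
  have oD: "open D" using hw harmonic_on_def by blast
  obtain R where R: "R>0" "\<forall>x\<in>D. norm x \<le> R" using bounded_pos bD by blast
  define \<eta> where "\<eta> = (w x1 - e*k x1 - c)/(2*(R^2+1))"
  have Rp: "0 < 2*(R^2+1)" using zero_le_power2[of R] by (smt (verit))
  have eta: "\<eta> > 0" unfolding \<eta>_def using x1 Rp by (intro divide_pos_pos) auto
  have eq1: "w x1 - e*k x1 = c + 2*\<eta>*(R^2+1)" unfolding \<eta>_def using Rp by (simp add: field_simps)
  define F where "F = (\<lambda>x. w x - e*k x + \<eta>*(norm x)^2)"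
  define m where "m = F x1"
  define S where "S = {x\<in>D. m \<le> F x}"
  have big: "\<forall>x\<in>S. c < w x - e*k x"
  proof
    fix x assume "x\<in>S"
    then have xD: "x\<in>D" and mx: "m \<le> F x" by (auto simp: S_def)
    have "(norm x)^2 \<le> R^2" using R xD by (simp add: power_mono)
    then have a: "\<eta>*(norm x)^2 \<le> \<eta>*R^2" using eta by (simp add: mult_left_mono)
    have b: "m \<ge> w x1 - e*k x1" unfolding m_def F_def using eta by simp
    have "0 < R^2+2" using zero_le_power2[of R] by (smt (verit))
    then have "0 < \<eta>*(R^2+2)" using eta by simp
    then show "c < w x - e*k x" using a b mx eq1 unfolding F_def by (simp add: algebra_simps)
  qed
  have cw: "continuous_on D (\<lambda>x. w x + \<eta>*(norm x)^2)" using harmonic_cont[OF hw] by (intro continuous_intros)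
  have lsc: "lsc_on D k" using sk superharmonic_on_def by blast
  have usc: "\<forall>z\<in>D. \<forall>t. F z < t \<longrightarrow> (\<exists>U. open U \<and> z \<in> U \<and> (\<forall>x\<in>U\<inter>D. F x < t))"
  proof (intro ballI allI impI)
    fix z t assume z: "z\<in>D" and zt: "F z < t"
    define \<delta> where "\<delta> = t - F z"
    have d: "\<delta> > 0" using zt \<delta>_def by simp
    have tz: "((\<lambda>x. w x + \<eta>*(norm x)^2) \<longlongrightarrow> w z + \<eta>*(norm z)^2) (at z within D)"
      using cw z unfolding continuous_on_def by blast
    have e1: "eventually (\<lambda>x. w x + \<eta>*(norm x)^2 < w z + \<eta>*(norm z)^2 + \<delta>/2) (at z within D)"
      using d by (intro order_tendstoD(2)[OF tz]) auto
    have e2: "eventually (\<lambda>x. k z - \<delta>/(2*e) < k x) (at z within D)"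
      using lsc z d e unfolding lsc_on_def by simp
    have "eventually (\<lambda>x. F x < t) (at z within D)"
      using e1 e2
    proof eventually_elim
      case (elim x)
      then have "e * (k z - \<delta>/(2*e)) < e * k x" using e by simp
      then have "e*k z - \<delta>/2 < e*k x" using e by (simp add: right_diff_distrib)
      then show ?case using elim(1) unfolding F_def \<delta>_def by (simp add: field_simps)
    qed
    then obtain U where "open U" "z\<in>U" "\<forall>x\<in>U. x\<in>D \<longrightarrow> x\<noteq>z \<longrightarrow> F x < t"
      unfolding eventually_at_topological by blast
    then show "\<exists>U. open U \<and> z\<in>U \<and> (\<forall>x\<in>U\<inter>D. F x < t)" using zt by (intro exI[of _ U]) auto
  qed
  have SD: "S \<subseteq> D" by (auto simp: S_def)
  have clS: "closure S \<subseteq> S"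
  proof
    fix z assume z: "z \<in> closure S"
    have zD: "z \<in> D"
    proof (rule ccontr)
      assume "z \<notin> D"
      moreover have "z \<in> closure D" using z closure_mono[OF SD] by blast
      ultimately have "z \<in> frontier D" using oD by (simp add: frontier_def interior_open)
      then obtain \<rho> where \<rho>: "\<rho>>0" "\<forall>x\<in>D. dist x z < \<rho> \<longrightarrow> w x - e*k x < c" using B by blast
      obtain x where "x\<in>S" "dist x z < \<rho>" using z \<rho>(1) closure_approachable by blast
      then show False using \<rho>(2) big SD by force
    qed
    have "m \<le> F z"
    proof (rule ccontr)
      assume "\<not> m \<le> F z"
      then obtain U where U: "open U" "z\<in>U" "\<forall>x\<in>U\<inter>D. F x < m" using usc zD by (meson not_le)
      have "U \<inter> S \<noteq> {}" using z U(1,2) open_Int_closure_eq_empty by blast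
      then obtain x where "x\<in>U" "x\<in>S" by blast
      then show False using U(3) SD unfolding S_def by force
    qed
    then show "z\<in>S" using zD by (simp add: S_def)
  qed
  have "closed S" using clS by (simp add: closure_subset_eq)
  moreover have "bounded S" using bD SD by (rule bounded_subset)
  ultimately have cS: "compact S" by (simp add: compact_eq_bounded_closed)
  have x1S: "x1 \<in> S" using x1 by (simp add: S_def m_def)
  have uscS: "\<forall>z\<in>S. \<forall>t. F z < t \<longrightarrow> (\<exists>U. open U \<and> z \<in> U \<and> (\<forall>x\<in>U\<inter>S. F x < t))"
  proof (intro ballI allI impI)
    fix z t assume zt: "z\<in>S" "F z < t"
    then obtain U where "open U" "z\<in>U" "\<forall>x\<in>U\<inter>D. F x < t" using usc SD by blast
    then show "\<exists>U. open U \<and> z \<in> U \<and> (\<forall>x\<in>U\<inter>S. F x < t)" using SD by (intro exI[of _ U]) auto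
  qed
  obtain x0 where x0: "x0\<in>S" "\<forall>x\<in>S. F x \<le> F x0"
    using usc_max[OF cS _ uscS] x1S by blast
  have "\<forall>x\<in>D. F x \<le> F x0"
  proof
    fix x assume "x\<in>D"
    show "F x \<le> F x0"
    proof (cases "x\<in>S")
      case True then show ?thesis using x0 by blast
    next
      case False then have "F x < m" using \<open>x\<in>D\<close> by (auto simp: S_def)
      moreover have "m \<le> F x0" using x0 by (auto simp: S_def)
      ultimately show ?thesis by simp
    qed
  qed
  then show False using touch[OF hw sk e eta, of x0] x0 SD unfolding F_def by blast
qed



lemma harmonic_diff: "harmonic_on D u \<Longrightarrow> harmonic_on D v \<Longrightarrow> harmonic_on D (\<lambda>x. u x - v x)"
  using harmonic_lin[of D u v 1 "-1" 0 0] by simp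

lemma harmonic_neg: "harmonic_on D u \<Longrightarrow> harmonic_on D (\<lambda>x. - u x)"
  using harmonic_lin[of D u u "-1" 0 0 0] by simp

lemma cc_H:
  assumes "controlled_conv D f h k" "y \<in> frontier D" "A \<subseteq> D" "y \<in> closure A"
  shows "(Limsup (at y within A) (\<lambda>x. ereal (k x)) < \<infinity> \<longrightarrow> (h \<longlongrightarrow> real_of_ereal (f y)) (at y within A)) \<and>
     (filterlim k at_top (at y within A) \<longrightarrow> ((\<lambda>x. h x / (1 + k x)) \<longlongrightarrow> 0) (at y within A))"
  using assms unfolding controlled_conv_def by blast

lemma cc_Hneg:
  assumes "controlled_conv D f h k" "y \<in> frontier D" "A \<subseteq> D" "y \<in> closure A"
  shows "(Limsup (at y within A) (\<lambda>x. ereal (k x)) < \<infinity> \<longrightarrow> ((\<lambda>x. - h x) \<longlongrightarrow> - real_of_ereal (f y)) (at y within A)) \<and>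
     (filterlim k at_top (at y within A) \<longrightarrow> ((\<lambda>x. - h x / (1 + k x)) \<longlongrightarrow> 0) (at y within A))"
proof -
  note c = cc_H[OF assms]
  have "((\<lambda>x. - (h x / (1 + k x))) \<longlongrightarrow> - 0) (at y within A)" if "filterlim k at_top (at y within A)"
    using c that by (intro tendsto_minus) blast
  then show ?thesis using c by (auto intro: tendsto_minus)
qed

lemma BL_cc:
  fixes h k :: "'a::euclidean_space \<Rightarrow> real"
  assumes "controlled_conv D f h k" "open D" "y \<in> frontier D" "\<forall>x\<in>D. 0 \<le> k x" "e > 0"
  shows "\<exists>\<rho>>0. \<forall>x\<in>D. dist x y < \<rho> \<longrightarrow> h x - e * k x < real_of_ereal (f y) + e"
  by (rule BL[OF assms(2-5)]) (rule cc_H[OF assms(1,3)])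

lemma BL_cc_neg:
  fixes h k :: "'a::euclidean_space \<Rightarrow> real"
  assumes "controlled_conv D f h k" "open D" "y \<in> frontier D" "\<forall>x\<in>D. 0 \<le> k x" "e > 0"
  shows "\<exists>\<rho>>0. \<forall>x\<in>D. dist x y < \<rho> \<longrightarrow> real_of_ereal (f y) - e < h x + e * k x"
proof -
  have "\<exists>\<rho>>0. \<forall>x\<in>D. dist x y < \<rho> \<longrightarrow> - h x - e * k x < - real_of_ereal (f y) + e"
    by (rule BL[OF assms(2-5), of "\<lambda>x. - h x"]) (rule cc_Hneg[OF assms(1,3)])
  then show ?thesis by (metis add.commute minus_diff_eq minus_less_iff diff_minus_eq_add uminus_add_conv_diff)
qed

lemma small_le:
  fixes a K :: real
  assumes "\<And>e. e > 0 \<Longrightarrow> a \<le> e * K" "K \<ge> 0"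
  shows "a \<le> 0"
proof (rule ccontr)
  assume a: "\<not> a \<le> 0"
  show False
  proof (cases "K = 0")
    case True then show False using assms(1)[of 1] a by simp
  next
    case False
    then have K: "K > 0" using assms(2) by simp
    have "a \<le> (a/(2*K)) * K" using assms(1)[of "a/(2*K)"] a K by simp
    also have "\<dots> = a/2" using K by simp
    finally show False using a by simp
  qed
qed

lemma part2:
  fixes u k :: "'a::euclidean_space \<Rightarrow> real"
  assumes bD: "bounded D" and hu: "harmonic_on D u" and sk: "superharmonic_on D k"
    and k0: "\<forall>x\<in>D. 0 \<le> k x" and cc: "controlled_conv D (\<lambda>_. 0) u k"
  shows "\<forall>x\<in>D. u x = 0"
proof
  fix x assume x: "x \<in> D"
  have oD: "open D" using hu harmonic_on_def by blast
  have p: "u x - e * k x \<le> e" if e: "e > 0" for e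
  proof -
    have "\<forall>y\<in>frontier D. \<exists>\<rho>>0. \<forall>x\<in>D. dist x y < \<rho> \<longrightarrow> u x - e * k x < e"
      using BL_cc[OF cc oD _ k0 e] by simp
    then show ?thesis using MP[OF bD hu sk e] x by blast
  qed
  have n: "- u x - e * k x \<le> e" if e: "e > 0" for e
  proof -
    have "\<forall>y\<in>frontier D. \<exists>\<rho>>0. \<forall>x\<in>D. dist x y < \<rho> \<longrightarrow> - u x - e * k x < e"
    proof
      fix y assume "y\<in>frontier D"
      then obtain \<rho> where r: "\<rho>>0" "\<forall>x\<in>D. dist x y < \<rho> \<longrightarrow> real_of_ereal ((\<lambda>_. 0) y) - e < u x + e*k x"
        using BL_cc_neg[OF cc oD _ k0 e] by blast
      show "\<exists>\<rho>>0. \<forall>x\<in>D. dist x y < \<rho> \<longrightarrow> - u x - e * k x < e"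
      proof (intro exI[of _ \<rho>] conjI ballI impI)
        fix x assume "x \<in> D" "dist x y < \<rho>"
        then have "- e < u x + e*k x" using r by simp
        then show "- u x - e * k x < e" by linarith
      qed (use r in simp)
    qed
    then show ?thesis using MP[OF bD harmonic_neg[OF hu] sk e] x by blast
  qed
  have K: "0 \<le> 1 + k x" using k0 x by simp
  have "u x \<le> 0" by (rule small_le[OF _ K]) (use p in \<open>simp add: algebra_simps\<close>)
  moreover have "- u x \<le> 0" by (rule small_le[OF _ K]) (use n in \<open>simp add: algebra_simps\<close>)
  ultimately show "u x = 0" by simp
qed



lemma half:
  fixes D :: "('a::euclidean_space) set" and f :: "'a \<Rightarrow> ereal"
    and h1 h2 k1 k2 :: "'a \<Rightarrow> real"
  assumes rD: "regular_domain D"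
    and hh1: "harmonic_on D h1" and hh2: "harmonic_on D h2"
    and sk1: "superharmonic_on D k1" and k10: "\<forall>x\<in>D. 0 \<le> k1 x"
    and sk2: "superharmonic_on D k2" and k20: "\<forall>x\<in>D. 0 \<le> k2 x"
    and cc1: "controlled_conv D f h1 k1" and cc2: "controlled_conv D f h2 k2"
  shows "\<forall>x\<in>D. h1 x \<le> h2 x"
proof -
  have oD: "open D" and bD: "bounded D" and dir: "\<forall>\<phi>. continuous_on (frontier D) \<phi> \<longrightarrow>
        (\<exists>h. harmonic_on D h \<and> (\<forall>y\<in>frontier D. (h \<longlongrightarrow> \<phi> y) (at y within D)))"
    using rD unfolding regular_domain_def by blast+
  have key: "\<forall>x\<in>D. h1 x - h2 x - e*(k1 x + k2 x) \<le> 6*e" if e: "e > 0" for e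
  proof -
    have "\<forall>y\<in>frontier D. \<exists>t \<rho>. \<rho>>0 \<and> (\<forall>x\<in>D. dist x y < \<rho> \<longrightarrow> h1 x - e*k1 x < t + e \<and> t - e < h2 x + e*k2 x)"
    proof
      fix y assume y: "y \<in> frontier D"
      obtain \<rho>1 where r1: "\<rho>1>0" "\<forall>x\<in>D. dist x y < \<rho>1 \<longrightarrow> h1 x - e * k1 x < real_of_ereal (f y) + e"
        using BL_cc[OF cc1 oD y k10 e] by blast
      obtain \<rho>2 where r2: "\<rho>2>0" "\<forall>x\<in>D. dist x y < \<rho>2 \<longrightarrow> real_of_ereal (f y) - e < h2 x + e * k2 x"
        using BL_cc_neg[OF cc2 oD y k20 e] by blast
      show "\<exists>t \<rho>. \<rho>>0 \<and> (\<forall>x\<in>D. dist x y < \<rho> \<longrightarrow> h1 x - e*k1 x < t + e \<and> t - e < h2 x + e*k2 x)"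
        using r1 r2 by (intro exI[of _ "real_of_ereal (f y)"] exI[of _ "min \<rho>1 \<rho>2"]) auto
    qed
    then obtain t \<rho> where tr: "\<forall>y\<in>frontier D. \<rho> y > 0 \<and>
        (\<forall>x\<in>D. dist x y < \<rho> y \<longrightarrow> h1 x - e*k1 x < t y + e \<and> t y - e < h2 x + e*k2 x)"
      by metis
    have cf: "compact (frontier D)" using bD by (rule compact_frontier_bounded)
    have cov: "frontier D \<subseteq> (\<Union>y\<in>frontier D. ball y (\<rho> y/2))" using tr by force
    obtain Y where Y: "Y \<subseteq> frontier D" "finite Y" "frontier D \<subseteq> (\<Union>y\<in>Y. ball y (\<rho> y/2))"
      using compactE_image[OF cf, of "frontier D" "\<lambda>y. ball y (\<rho> y/2)"] cov by blast
    define \<omega> where "\<omega> = (\<lambda>y z. max 0 (\<rho> y/2 - dist z y))"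
    define \<phi> where "\<phi> = (\<lambda>z. (\<Sum>y\<in>Y. \<omega> y z * t y) / (\<Sum>y\<in>Y. \<omega> y z))"
    have \<omega>0: "0 \<le> \<omega> y z" for y z by (simp add: \<omega>_def)
    have pos: "0 < (\<Sum>y\<in>Y. \<omega> y z)" if z: "z \<in> frontier D" for z
    proof -
      obtain y0 where y0: "y0 \<in> Y" "z \<in> ball y0 (\<rho> y0/2)" using Y z by blast
      then have "0 < \<omega> y0 z" by (simp add: \<omega>_def dist_commute)
      then show ?thesis using y0 Y(2) \<omega>0 by (intro sum_pos2) auto
    qed
    have c\<phi>: "continuous_on (frontier D) \<phi>"
    proof -
      have nz: "\<forall>z\<in>frontier D. (\<Sum>y\<in>Y. \<omega> y z) \<noteq> 0" using pos by (metis less_irrefl)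
      have c1: "continuous_on (frontier D) (\<lambda>z. \<Sum>y\<in>Y. \<omega> y z * t y)"
        unfolding \<omega>_def by (intro continuous_intros)
      have c2: "continuous_on (frontier D) (\<lambda>z. \<Sum>y\<in>Y. \<omega> y z)"
        unfolding \<omega>_def by (intro continuous_intros)
      show ?thesis unfolding \<phi>_def by (rule continuous_on_divide[OF c1 c2 nz])
    qed
    obtain H where hH: "harmonic_on D H" and bH: "\<forall>z\<in>frontier D. (H \<longlongrightarrow> \<phi> z) (at z within D)"
      using dir c\<phi> by blast
    define \<delta> where "\<delta> = Min (insert 1 ((\<lambda>y. \<rho> y/2) ` Y))"
    have \<delta>: "\<delta> > 0" unfolding \<delta>_def using Y tr by auto
    have \<delta>le: "\<delta> \<le> \<rho> y/2" if "y \<in> Y" for y unfolding \<delta>_def by (rule Min_le) (use Y(2) that in auto)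
    have cl: "\<exists>\<rho>'>0. \<forall>x\<in>D. dist x z < \<rho>' \<longrightarrow> h1 x - e*k1 x \<le> \<phi> z + e \<and> \<phi> z - e \<le> h2 x + e*k2 x \<and> \<bar>H x - \<phi> z\<bar> < e"
      if z: "z \<in> frontier D" for z
    proof -
      have zD: "z \<notin> D" using z oD by (simp add: frontier_def interior_open)
      have "eventually (\<lambda>x. dist (H x) (\<phi> z) < e) (at z within D)" using bH z e tendstoD by blast
      then obtain d where d: "d>0" "\<forall>x\<in>D. x \<noteq> z \<and> dist x z < d \<longrightarrow> dist (H x) (\<phi> z) < e"
        unfolding eventually_at by blast
      have sp: "0 < (\<Sum>y\<in>Y. \<omega> y z)" using pos z by blast
      show ?thesis
      proof (intro exI[of _ "min d \<delta>"] conjI ballI impI)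
        show "0 < min d \<delta>" using d \<delta> by simp
        fix x assume x: "x \<in> D" "dist x z < min d \<delta>"
        have near: "h1 x - e*k1 x < t y + e \<and> t y - e < h2 x + e*k2 x" if y: "y \<in> Y" "dist z y < \<rho> y/2" for y
        proof -
          have "dist x y \<le> dist x z + dist z y" by (rule dist_triangle)
          also have "\<dots> < \<rho> y" using x(2) y \<delta>le[OF y(1)] by simp
          finally show ?thesis using tr Y(1) y(1) x(1) by blast
        qed
        have t1: "\<omega> y z * (h1 x - e*k1 x - e) \<le> \<omega> y z * t y" if y: "y \<in> Y" for y
        proof (cases "dist z y < \<rho> y/2")
          case True then show ?thesis using near[OF y True] \<omega>0 by (intro mult_left_mono) auto
        next
          case False then have "\<omega> y z = 0" by (simp add: \<omega>_def)
          then show ?thesis by simp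
        qed
        have t2: "\<omega> y z * t y \<le> \<omega> y z * (h2 x + e*k2 x + e)" if y: "y \<in> Y" for y
        proof (cases "dist z y < \<rho> y/2")
          case True then show ?thesis using near[OF y True] \<omega>0 by (intro mult_left_mono) auto
        next
          case False then have "\<omega> y z = 0" by (simp add: \<omega>_def)
          then show ?thesis by simp
        qed
        have "(\<Sum>y\<in>Y. \<omega> y z) * (h1 x - e*k1 x - e) \<le> (\<Sum>y\<in>Y. \<omega> y z * t y)"
          unfolding sum_distrib_right using t1 by (intro sum_mono) auto
        then have "h1 x - e*k1 x - e \<le> \<phi> z" unfolding \<phi>_def using sp by (simp add: pos_le_divide_eq mult.commute)
        then show "h1 x - e*k1 x \<le> \<phi> z + e" by simp
        have "(\<Sum>y\<in>Y. \<omega> y z * t y) \<le> (\<Sum>y\<in>Y. \<omega> y z) * (h2 x + e*k2 x + e)"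
          unfolding sum_distrib_right using t2 by (intro sum_mono) auto
        then have "\<phi> z \<le> h2 x + e*k2 x + e" unfolding \<phi>_def using sp by (simp add: pos_divide_le_eq mult.commute)
        then show "\<phi> z - e \<le> h2 x + e*k2 x" by simp
        have "x \<noteq> z" using x zD by blast
        then have "dist (H x) (\<phi> z) < e" using d x by simp
        then show "\<bar>H x - \<phi> z\<bar> < e" by (simp add: dist_real_def)
      qed
    qed
    have m1: "\<forall>x\<in>D. (h1 x - H x) - e * k1 x \<le> 3*e"
    proof (rule MP[OF bD harmonic_diff[OF hh1 hH] sk1 e], intro ballI)
      fix z assume "z \<in> frontier D"
      then obtain \<rho>' where r: "\<rho>'>0" "\<forall>x\<in>D. dist x z < \<rho>' \<longrightarrow> h1 x - e*k1 x \<le> \<phi> z + e \<and> \<phi> z - e \<le> h2 x + e*k2 x \<and> \<bar>H x - \<phi> z\<bar> < e"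
        using cl by blast
      show "\<exists>\<rho>>0. \<forall>x\<in>D. dist x z < \<rho> \<longrightarrow> h1 x - H x - e * k1 x < 3*e"
      proof (intro exI[of _ \<rho>'] conjI ballI impI)
        fix x assume "x \<in> D" "dist x z < \<rho>'"
        then have "h1 x - e*k1 x \<le> \<phi> z + e" "\<bar>H x - \<phi> z\<bar> < e" using r by auto
        then show "h1 x - H x - e * k1 x < 3*e" using e by linarith
      qed (use r in simp)
    qed
    have m2: "\<forall>x\<in>D. (H x - h2 x) - e * k2 x \<le> 3*e"
    proof (rule MP[OF bD harmonic_diff[OF hH hh2] sk2 e], intro ballI)
      fix z assume "z \<in> frontier D"
      then obtain \<rho>' where r: "\<rho>'>0" "\<forall>x\<in>D. dist x z < \<rho>' \<longrightarrow> h1 x - e*k1 x \<le> \<phi> z + e \<and> \<phi> z - e \<le> h2 x + e*k2 x \<and> \<bar>H x - \<phi> z\<bar> < e"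
        using cl by blast
      show "\<exists>\<rho>>0. \<forall>x\<in>D. dist x z < \<rho> \<longrightarrow> H x - h2 x - e * k2 x < 3*e"
      proof (intro exI[of _ \<rho>'] conjI ballI impI)
        fix x assume "x \<in> D" "dist x z < \<rho>'"
        then have "\<phi> z - e \<le> h2 x + e*k2 x" "\<bar>H x - \<phi> z\<bar> < e" using r by auto
        then show "H x - h2 x - e * k2 x < 3*e" using e by linarith
      qed (use r in simp)
    qed
    show ?thesis
    proof
      fix x assume "x \<in> D"
      then have "(h1 x - H x) - e * k1 x \<le> 3*e" "(H x - h2 x) - e * k2 x \<le> 3*e" using m1 m2 by auto
      then show "h1 x - h2 x - e*(k1 x + k2 x) \<le> 6*e" by (simp add: algebra_simps)
    qed
  qed
  show ?thesis
  proof
    fix x assume x: "x \<in> D"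
    have K: "0 \<le> 6 + k1 x + k2 x" using k10 k20 x by (simp add: add_nonneg_nonneg)
    have "h1 x - h2 x \<le> 0"
    proof (rule small_le[OF _ K])
      fix e :: real assume "e > 0"
      then have "h1 x - h2 x - e*(k1 x + k2 x) \<le> 6*e" using key x by blast
      then show "h1 x - h2 x \<le> e * (6 + k1 x + k2 x)" by (simp add: algebra_simps)
    qed
    then show "h1 x \<le> h2 x" by simp
  qed
qed

theorem corollary2p4:
  fixes D :: "('a::euclidean_space) set" and f :: "'a \<Rightarrow> ereal"
    and h1 h2 k1 k2 :: "'a \<Rightarrow> real"
  assumes "DIM('a) \<ge> 3"
    and "regular_domain D"
    and "harmonic_on D h1" and "harmonic_on D h2"
    and "superharmonic_on D k1" and "\<forall>x\<in>D. 0 \<le> k1 x"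
    and "superharmonic_on D k2" and "\<forall>x\<in>D. 0 \<le> k2 x"
    and "controlled_conv D f h1 k1" and "controlled_conv D f h2 k2"
  shows "(\<forall>x\<in>D. h1 x = h2 x) \<and>
    (\<forall>u k. harmonic_on D u \<and> superharmonic_on D k \<and> (\<forall>x\<in>D. 0 \<le> k x)
        \<and> controlled_conv D (\<lambda>_. 0) u k \<longrightarrow> (\<forall>x\<in>D. u x = 0))"
proof
  have a: "\<forall>x\<in>D. h1 x \<le> h2 x"
    by (rule half[OF assms(2-10)])
  have b: "\<forall>x\<in>D. h2 x \<le> h1 x"
    by (rule half[OF assms(2,4,3,7,8,5,6,10,9)])
  show "\<forall>x\<in>D. h1 x = h2 x" using a b by force
  have bD: "bounded D" using assms(2) unfolding regular_domain_def by blast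
  show "\<forall>u k. harmonic_on D u \<and> superharmonic_on D k \<and> (\<forall>x\<in>D. 0 \<le> k x)
        \<and> controlled_conv D (\<lambda>_. 0) u k \<longrightarrow> (\<forall>x\<in>D. u x = 0)"
    using part2[OF bD] by blast
qed

end
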